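(* For every real $x>1$, $$\mathcal L\left(\frac{1}{\left(x+\sqrt{x^2-1}\right)^2}\right)=\sum_{m=1}^{\infty}\mathcal L\left(\frac{1}{U_m(x)^2}\right),$$ where $U_m$ is the $m$-th Chebyshev polynomial of the second kind.
   Context: $\mathcal L$ is the Rogers dilogarithm: for real $z\le1$, $\mathcal L(z)=\mathrm{Li}_2(z)+\tfrac12\log|z|\log(1-z)$, where $\mathrm{Li}_2(z)=\sum_{m\ge1}z^m/m^2$. The Chebyshev polynomials of the second kind $U_m\in\mathbb Z[x]$ are determined by $U_m(\cos\theta)=\sin((m+1)\theta)/\sin\theta$. *)

theory Defs
  imports "HOL-Analysis.Analysis" "HOL-Computational_Algebra.Polynomial"
begin

definition Li2 :: "real \<Rightarrow> real" where
  "Li2 z = (\<Sum>m. z ^ (Suc m) / (real (Suc m))^2)"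

definition rogers_L :: "real \<Rightarrow> real" where
  "rogers_L z = Li2 z + 1/2 * ln \<bar>z\<bar> * ln (1 - z)"

fun chebU :: "nat \<Rightarrow> int poly" where
  "chebU 0 = 1"
| "chebU (Suc 0) = [:0, 2:]"
| "chebU (Suc (Suc m)) = [:0, 2:] * chebU (Suc m) - chebU m"

end

theory Submission imports Defs "HOL-Real_Asymp.Real_Asymp" begin

definition c2 :: "nat \<Rightarrow> real" where "c2 n = (if n = 0 then 0 else 1 / (real n)^2)"

lemma c2_summable: assumes "\<bar>z\<bar> < 1" shows "summable (\<lambda>n. c2 n * z^n)"
proof (rule summable_comparison_test'[where g="\<lambda>n. \<bar>z\<bar>^n" and N=0])
  show "summable (\<lambda>n. \<bar>z\<bar>^n)" using assms by (simp add: summable_geometric)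
  fix n :: nat
  have "0 \<le> c2 n" "c2 n \<le> 1" by (auto simp: c2_def field_simps)
  then show "norm (c2 n * z^n) \<le> \<bar>z\<bar>^n"
    by (simp add: abs_mult power_abs mult_left_le_one_le)
qed

lemma Li2_eq: assumes "\<bar>z\<bar> < 1" shows "Li2 z = (\<Sum>n. c2 n * z^n)"
proof -
  have "(\<lambda>n. c2 n * z^n) sums (\<Sum>n. c2 n * z^n)" using c2_summable[OF assms] by (simp add: summable_sums)
  hence "(\<lambda>n. c2 (Suc n) * z^(Suc n)) sums (\<Sum>n. c2 n * z^n)" by (subst sums_Suc_iff) (simp add: c2_def)
  moreover have "(\<lambda>n. c2 (Suc n) * z^(Suc n)) = (\<lambda>m. z ^ (Suc m) / (real (Suc m))^2)"
    by (auto simp: c2_def fun_eq_iff)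
  ultimately show ?thesis unfolding Li2_def by (simp add: sums_iff)
qed

lemma diffs_c2: "diffs c2 n = 1 / real (Suc n)"
  by (simp add: diffs_def c2_def power2_eq_square del: of_nat_Suc)

lemma diffs_c2_sum: assumes "0 < z" "z < 1" shows "(\<Sum>n. diffs c2 n * z^n) = - ln (1 - z) / z"
proof -
  have "(\<lambda>n. - ((- (-z))^n) / of_nat n) sums ln (1 + -z)"
    by (rule ln_series') (use assms in auto)
  hence "(\<lambda>n. - (z^n) / real n) sums ln (1 - z)" by simp
  hence "(\<lambda>n. - (z^(Suc n)) / real (Suc n)) sums ln (1 - z)" by (subst sums_Suc_iff) simp
  hence "(\<lambda>n. (-1/z) * (- (z^(Suc n)) / real (Suc n))) sums ((-1/z) * ln (1 - z))" by (rule sums_mult)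
  moreover have "(\<lambda>n. (-1/z) * (- (z^(Suc n)) / real (Suc n))) = (\<lambda>n. diffs c2 n * z^n)"
    using assms by (auto simp: fun_eq_iff diffs_c2 field_simps)
  ultimately show ?thesis by (simp add: sums_iff)
qed

lemma Li2_deriv_gen: assumes "\<bar>z\<bar> < 1"
  shows "(Li2 has_real_derivative (\<Sum>n. diffs c2 n * z^n)) (at z)"
proof -
  have "((\<lambda>z. \<Sum>n. c2 n * z^n) has_real_derivative (\<Sum>n. diffs c2 n * z^n)) (at z)"
    by (rule termdiffs_strong'[where K=1]) (use assms c2_summable in auto)
  then show ?thesis
    by (rule has_field_derivative_transform_within_open[where S="{-1<..<1}"])
       (use assms Li2_eq in auto)
qed

lemma Li2_deriv: assumes "0 < z" "z < 1" shows "(Li2 has_real_derivative (- ln (1 - z) / z)) (at z)"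
  using Li2_deriv_gen[of z] diffs_c2_sum[OF assms] assms by simp

lemma rogers_L_alt: "rogers_L z = Li2 z + 1/2 * ln z * ln (1 - z)"
  unfolding rogers_L_def by (simp add: ln_real_def)

lemma rogers_L_0 [simp]: "rogers_L 0 = 0"
  by (simp add: rogers_L_alt Li2_def)

lemma L_deriv: assumes "0 < z" "z < 1"
  shows "(rogers_L has_real_derivative (-(1/2)*(ln(1-z)/z + ln z/(1-z)))) (at z)"
proof -
  note d1 = Li2_deriv[OF assms]
  have "((\<lambda>z. Li2 z + 1/2 * ln z * ln (1 - z)) has_real_derivative (-(1/2)*(ln(1-z)/z + ln z/(1-z)))) (at z)"
    using assms by (auto intro!: derivative_eq_intros d1 simp: field_simps)
  then show ?thesis by (simp add: rogers_L_alt[abs_def])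
qed

lemma L_cont: "continuous_on {0..<1} rogers_L"
proof -
  have "continuous (at x within {0..<1}) rogers_L" if x: "0 \<le> x" "x < 1" for x
  proof (cases "x = 0")
    case False
    with x have "isCont rogers_L x" using L_deriv[of x] by (auto intro: DERIV_isCont)
    then show ?thesis by (rule continuous_at_imp_continuous_at_within)
  next
    case True
    have eqf: "at (0::real) within {0..<1} = at_right 0"
      by (rule at_within_nhd[where S="{-1<..<1}"]) auto
    have "isCont Li2 0" using Li2_deriv_gen[of 0] by (auto intro: DERIV_isCont)
    hence l1: "(Li2 \<longlongrightarrow> Li2 0) (at_right 0)" by (simp add: isCont_def filterlim_at_split)
    have l2: "((\<lambda>z::real. ln z * ln (1 - z)) \<longlongrightarrow> 0) (at_right 0)" by real_asymp
    have "((\<lambda>z. Li2 z + 1/2 * (ln z * ln (1 - z))) \<longlongrightarrow> Li2 0 + 1/2 * 0) (at_right 0)"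
      by (intro tendsto_intros l1 l2)
    hence "(rogers_L \<longlongrightarrow> rogers_L 0) (at_right 0)"
      by (simp add: rogers_L_alt[abs_def] Li2_def mult.assoc)
    then show ?thesis using True by (simp add: continuous_within eqf)
  qed
  then show ?thesis by (simp add: continuous_on_eq_continuous_within)
qed

lemma L_comp:
  assumes "(g has_real_derivative g') (at s)" "0 < g s" "g s < 1" "g' = g s * D" "g' = -(1 - g s) * D1"
  shows "((\<lambda>s. rogers_L (g s)) has_real_derivative (-(1/2)*(ln (1 - g s) * D - ln (g s) * D1))) (at s)"
proof -
  have "((\<lambda>s. rogers_L (g s)) has_real_derivative (-(1/2)*(ln(1-g s)/g s + ln (g s)/(1-g s))) * g') (at s)"
    by (rule DERIV_chain2[OF L_deriv assms(1)]) (use assms in auto)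
  moreover have "(-(1/2)*(ln(1-g s)/g s + ln (g s)/(1-g s))) * g' = -(1/2)*(ln (1 - g s) * D - ln (g s) * D1)"
  proof -
    have "(-(1/2)*(ln(1-g s)/g s + ln (g s)/(1-g s))) * g'
        = -(1/2)*(ln(1-g s)/g s * g' + ln (g s)/(1-g s) * g')" by (simp add: algebra_simps)
    also have "ln(1-g s)/g s * g' = ln(1-g s) * D" using assms(2,4) by simp
    also have "ln(g s)/(1-g s) * g' = ln (g s) * (-(1-g s) * D1)/(1-g s)" by (simp add: assms(5))
    also have "\<dots> = -(ln (g s) * D1) * (1 - g s)/(1-g s)" by (simp add: algebra_simps)
    also have "\<dots> = - ln (g s) * D1" using assms(3) by simp
    finally show ?thesis by simp
  qed
  ultimately show ?thesis by simp
qed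

definition ff :: "real \<Rightarrow> real \<Rightarrow> real" where "ff r s = s * (1-r)^2/(1-r * s)^2"
definition fa :: "real \<Rightarrow> real \<Rightarrow> real" where "fa r s = s * (1-r)/(1-r * s)"
definition fb :: "real \<Rightarrow> real \<Rightarrow> real" where "fb r s = r * (1-s)/(1-r * s)"

lemma rs_lt: fixes r s :: real assumes "0<r" "r<1" "0\<le>s" "s<1" shows "r * s < 1" "r * s \<le> s" "0 \<le> r * s" "r * s<r"
proof -
  show "r * s \<le> s" using mult_right_mono[of r 1 s] assms by simp
  then show "r * s < 1" using assms by simp
  show "0 \<le> r * s" using assms by simp
  show "r * s<r" using mult_strict_left_mono[of s 1 r] assms by simp
qed

lemma ranges: assumes "0<r" "r<1" "0\<le>s" "s<1"
  shows "0 \<le> ff r s" "ff r s < 1" "0 \<le> fa r s" "fa r s < 1" "0 < fb r s" "fb r s < 1"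
    "0 < s \<Longrightarrow> 0 < ff r s" "0 < s \<Longrightarrow> 0 < fa r s"
    "1 - ff r s = (1-s) * (1-r * (r * s))/(1-r * s)^2"
    "1 - fa r s = (1-s)/(1-r * s)" "1 - fb r s = (1-r)/(1-r * s)"
proof -
  note h = rs_lt[OF assms]
  have h2: "r * (r * s) < 1" using rs_lt[OF assms(1,2) _ h(1)] h by auto
  have d: "(1-r * s)^2 \<noteq> 0" using h by simp
  have "1 - ff r s = ((1-r * s)^2 - s * (1-r)^2)/(1-r * s)^2" unfolding ff_def using d
    by (simp add: field_simps)
  also have "(1-r * s)^2 - s * (1-r)^2 = (1-s) * (1-r * (r * s))" by (simp add: algebra_simps power2_eq_square)
  finally show e1: "1 - ff r s = (1-s) * (1-r * (r * s))/(1-r * s)^2" .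
  show e2: "1 - fa r s = (1-s)/(1-r * s)" using h unfolding fa_def by (simp add: field_simps)
  show e3: "1 - fb r s = (1-r)/(1-r * s)" using h unfolding fb_def by (simp add: field_simps)
  show "0 \<le> ff r s" "0 \<le> fa r s" "0 < fb r s" "0 < s \<Longrightarrow> 0 < ff r s" "0 < s \<Longrightarrow> 0 < fa r s"
    using assms h unfolding ff_def fa_def fb_def by auto
  have "0 < 1 - ff r s" unfolding e1 using assms h h2 by auto
  then show "ff r s < 1" by simp
  have "0 < 1 - fa r s" unfolding e2 using assms h by auto
  then show "fa r s < 1" by simp
  have "0 < 1 - fb r s" unfolding e3 using assms h by auto
  then show "fb r s < 1" by simp
qed

lemma LD_mult: fixes f g :: "real \<Rightarrow> real"
  assumes "(f has_real_derivative f x * Df) (at x)" "(g has_real_derivative g x * Dg) (at x)"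
  shows "((\<lambda>x. f x * g x) has_real_derivative (f x * g x) * (Df + Dg)) (at x)"
  by (rule DERIV_cong[OF DERIV_mult'[OF assms]]) (simp add: algebra_simps)

lemma LD_div: fixes f g :: "real \<Rightarrow> real"
  assumes "(f has_real_derivative f x * Df) (at x)" "(g has_real_derivative g x * Dg) (at x)" "g x \<noteq> 0"
  shows "((\<lambda>x. f x / g x) has_real_derivative (f x / g x) * (Df - Dg)) (at x)"
  by (rule DERIV_cong[OF DERIV_divide[OF assms]]) (use assms(3) in \<open>simp add: field_simps\<close>)

lemma LD_pow2: fixes f :: "real \<Rightarrow> real"
  assumes "(f has_real_derivative f x * Df) (at x)"
  shows "((\<lambda>x. (f x)^2) has_real_derivative (f x)^2 * (2 * Df)) (at x)"
  unfolding power2_eq_square by (rule DERIV_cong[OF LD_mult[OF assms assms]]) simp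

lemma LD_id: "(x::real) \<noteq> 0 \<Longrightarrow> ((\<lambda>x. x) has_real_derivative x * (1/x)) (at x)"
  by (rule DERIV_cong[OF DERIV_ident]) simp

lemma LD_const: "((\<lambda>x. k) has_real_derivative k * 0) (at (x::real))"
  by (rule DERIV_cong[OF DERIV_const]) simp

lemma LD_cx: "(x::real) \<noteq> 0 \<Longrightarrow> ((\<lambda>x. c * x) has_real_derivative (c * x) * (1/x)) (at x)"
  by (auto intro!: derivative_eq_intros)

lemma LD_lin: "1 - c * (x::real) \<noteq> 0 \<Longrightarrow> ((\<lambda>x. 1 - c * x) has_real_derivative (1 - c * x) * (- c / (1 - c * x))) (at x)"
  by (auto intro!: derivative_eq_intros)

lemma LD_lin2: "1 - c * (d * (x::real)) \<noteq> 0 \<Longrightarrow>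
   ((\<lambda>x. 1 - c * (d * x)) has_real_derivative (1 - c * (d * x)) * (- (c * d) / (1 - c * (d * x)))) (at x)"
  by (auto intro!: derivative_eq_intros)

lemma LD_onem: "1 - (x::real) \<noteq> 0 \<Longrightarrow> ((\<lambda>x. 1 - x) has_real_derivative (1 - x) * (- 1 / (1 - x))) (at x)"
  by (auto intro!: derivative_eq_intros)

lemma two_forms: fixes g h :: "real \<Rightarrow> real"
  assumes "(g has_real_derivative g s * D) (at s)" "(h has_real_derivative h s * D1) (at s)"
    "open S" "s \<in> S" "\<And>y. y \<in> S \<Longrightarrow> h y = 1 - g y"
  shows "g s * D = -(1 - g s) * D1"
proof -
  have "((\<lambda>y. 1 - g y) has_real_derivative h s * D1) (at s)"
    by (rule has_field_derivative_transform_within_open[OF assms(2,3,4)]) (use assms(5) in auto)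
  moreover have "((\<lambda>y. 1 - g y) has_real_derivative 0 - g s * D) (at s)"
    by (rule DERIV_diff[OF DERIV_const assms(1)])
  ultimately have "0 - g s * D = h s * D1" by (rule DERIV_unique[rotated])
  then show ?thesis using assms(5)[OF assms(4)] by (simp add: algebra_simps)
qed

lemma G_deriv:
  fixes r s :: real assumes r: "0<r" "r<1" and s: "0<s" "s<1"
  shows "((\<lambda>s. rogers_L (ff r s) - rogers_L (fa r s) + rogers_L (fb r s)
            + rogers_L (fa r (r * s)) - rogers_L (fb r (r * s))) has_real_derivative 0) (at s)"
proof -
  note h = rs_lt[OF r less_imp_le[OF s(1)] s(2)]
  have s2: "0 < r * s" "r * s < 1" using r s h by auto
  note h2 = rs_lt[OF r less_imp_le[OF s2(1)] s2(2)]
  note R1 = ranges[OF r less_imp_le[OF s(1)] s(2)]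
  note R2 = ranges[OF r less_imp_le[OF s2(1)] s2(2)]
  have nz: "1 - r * s \<noteq> 0" "1 - r * (r * s) \<noteq> 0" "s \<noteq> 0" "1 - s \<noteq> 0" "r \<noteq> 0" "1 - r \<noteq> 0"
    "r * s \<noteq> 1" "r * (r * s) \<noteq> 1" "s \<noteq> 1" "r \<noteq> 1"
    using h(1) h2(1) r s by (smt (verit))+
  have nz2: "(1 - r * s)^2 \<noteq> 0" using nz by auto
  define S where "S = ln s"
  define P where "P = ln (1 - s)"
  define Q where "Q = ln (1 - r * s)"
  define R where "R = ln (1 - r * (r * s))"
  define A where "A = ln (1 - r)"
  define \<rho> where "\<rho> = ln r"
  define dS where "dS = 1 / s"
  define dP where "dP = - 1 / (1 - s)"
  define dQ where "dQ = - r / (1 - r * s)"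
  define dR where "dR = - (r * r) / (1 - r * (r * s))"
  have pos: "0 < s" "0 < 1 - s" "0 < 1 - r * s" "0 < 1 - r * (r * s)" "0 < 1 - r" "0 < r"
    using h(1) h2(1) r s by (smt (verit))+
  have lnf: "ln (ff r s) = S + 2 * A - 2 * Q" "ln (1 - ff r s) = P + R - 2 * Q"
    unfolding R1(9) unfolding ff_def using pos
    by (simp_all add: ln_div ln_mult ln_realpow S_def A_def Q_def P_def R_def)
  have lna: "ln (fa r s) = S + A - Q" "ln (1 - fa r s) = P - Q"
    unfolding R1(10) unfolding fa_def using pos
    by (simp_all add: ln_div ln_mult S_def A_def Q_def P_def)
  have lnb: "ln (fb r s) = \<rho> + P - Q" "ln (1 - fb r s) = A - Q"
    unfolding R1(11) unfolding fb_def using pos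
    by (simp_all add: ln_div ln_mult \<rho>_def A_def Q_def P_def)
  have lna2: "ln (fa r (r * s)) = \<rho> + S + A - R" "ln (1 - fa r (r * s)) = Q - R"
    unfolding R2(10) unfolding fa_def using pos
    by (simp_all add: ln_div ln_mult S_def A_def Q_def R_def \<rho>_def)
  have lnb2: "ln (fb r (r * s)) = \<rho> + Q - R" "ln (1 - fb r (r * s)) = A - R"
    unfolding R2(11) unfolding fb_def using pos
    by (simp_all add: ln_div ln_mult \<rho>_def A_def Q_def R_def)
  have opn: "open {0<..<(1::real)}" "s \<in> {0<..<1}" using s by auto
  have eqs: "\<And>y. y \<in> {0<..<1} \<Longrightarrow> (1 - y) * (1 - r * (r * y)) / (1 - r * y)^2 = 1 - ff r y"
     "\<And>y. y \<in> {0<..<1} \<Longrightarrow> (1 - y) / (1 - r * y) = 1 - fa r y"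
     "\<And>y. y \<in> {0<..<1} \<Longrightarrow> (1 - r) / (1 - r * y) = 1 - fb r y"
     "\<And>y. y \<in> {0<..<1} \<Longrightarrow> (1 - r * y) / (1 - r * (r * y)) = 1 - fa r (r * y)"
     "\<And>y. y \<in> {0<..<1} \<Longrightarrow> (1 - r) / (1 - r * (r * y)) = 1 - fb r (r * y)"
  proof -
    fix y :: real assume y: "y \<in> {0<..<1}"
    have y2: "0 \<le> r * y" "r * y < 1" using rs_lt[OF r, of y] y by auto
    show "(1 - y) * (1 - r * (r * y)) / (1 - r * y)^2 = 1 - ff r y"
      "(1 - y) / (1 - r * y) = 1 - fa r y" "(1 - r) / (1 - r * y) = 1 - fb r y"
      using ranges[OF r, of y] y by auto
    show "(1 - r * y) / (1 - r * (r * y)) = 1 - fa r (r * y)" "(1 - r) / (1 - r * (r * y)) = 1 - fb r (r * y)"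
      using ranges[OF r y2] by auto
  qed
  have df: "((\<lambda>s. ff r s) has_real_derivative ff r s * (dS - 2 * dQ)) (at s)"
    unfolding ff_def
    by (rule DERIV_cong[OF LD_div[OF LD_mult[OF LD_id LD_const] LD_pow2[OF LD_lin]]])
       (use nz nz2 in \<open>simp_all add: dS_def dQ_def\<close>)
  have dh: "((\<lambda>s. (1 - s) * (1 - r * (r * s)) / (1 - r * s)^2) has_real_derivative
       ((1 - s) * (1 - r * (r * s)) / (1 - r * s)^2) * (dP + dR - 2 * dQ)) (at s)"
    by (rule DERIV_cong[OF LD_div[OF LD_mult[OF LD_onem LD_lin2] LD_pow2[OF LD_lin]]])
       (use nz nz2 in \<open>simp_all add: dP_def dR_def dQ_def\<close>)
  have df1: "ff r s * (dS - 2 * dQ) = -(1 - ff r s) * (dP + dR - 2 * dQ)"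
    by (rule two_forms[OF df dh opn eqs(1)])
  have da: "((\<lambda>s. fa r s) has_real_derivative fa r s * (dS - dQ)) (at s)"
    unfolding fa_def
    by (rule DERIV_cong[OF LD_div[OF LD_mult[OF LD_id LD_const] LD_lin]])
       (use nz in \<open>simp_all add: dS_def dQ_def\<close>)
  have dh: "((\<lambda>s. (1 - s) / (1 - r * s)) has_real_derivative
       ((1 - s) / (1 - r * s)) * (dP - dQ)) (at s)"
    by (rule DERIV_cong[OF LD_div[OF LD_onem LD_lin]])
       (use nz in \<open>simp_all add: dP_def dQ_def\<close>)
  have da1: "fa r s * (dS - dQ) = -(1 - fa r s) * (dP - dQ)"
    by (rule two_forms[OF da dh opn eqs(2)])
  have db: "((\<lambda>s. fb r s) has_real_derivative fb r s * (dP - dQ)) (at s)"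
    unfolding fb_def
    by (rule DERIV_cong[OF LD_div[OF LD_mult[OF LD_const LD_onem] LD_lin]])
       (use nz in \<open>simp_all add: dP_def dQ_def\<close>)
  have dh: "((\<lambda>s. (1 - r) / (1 - r * s)) has_real_derivative
       ((1 - r) / (1 - r * s)) * (- dQ)) (at s)"
    by (rule DERIV_cong[OF LD_div[OF LD_const LD_lin]])
       (use nz in \<open>simp_all add: dQ_def\<close>)
  have db1: "fb r s * (dP - dQ) = -(1 - fb r s) * (- dQ)"
    by (rule two_forms[OF db dh opn eqs(3)])
  have da2: "((\<lambda>s. fa r (r * s)) has_real_derivative fa r (r * s) * (dS - dR)) (at s)"
    unfolding fa_def
    by (rule DERIV_cong[OF LD_div[OF LD_mult[OF LD_cx LD_const] LD_lin2]])
       (use nz in \<open>simp_all add: dS_def dR_def\<close>)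
  have dh: "((\<lambda>s. (1 - r * s) / (1 - r * (r * s))) has_real_derivative
       ((1 - r * s) / (1 - r * (r * s))) * (dQ - dR)) (at s)"
    by (rule DERIV_cong[OF LD_div[OF LD_lin LD_lin2]])
       (use nz in \<open>simp_all add: dQ_def dR_def\<close>)
  have da21: "fa r (r * s) * (dS - dR) = -(1 - fa r (r * s)) * (dQ - dR)"
    by (rule two_forms[OF da2 dh opn eqs(4)])
  have db2: "((\<lambda>s. fb r (r * s)) has_real_derivative fb r (r * s) * (dQ - dR)) (at s)"
    unfolding fb_def
    by (rule DERIV_cong[OF LD_div[OF LD_mult[OF LD_const LD_lin] LD_lin2]])
       (use nz in \<open>simp_all add: dQ_def dR_def\<close>)
  have dh: "((\<lambda>s. (1 - r) / (1 - r * (r * s))) has_real_derivative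
       ((1 - r) / (1 - r * (r * s))) * (- dR)) (at s)"
    by (rule DERIV_cong[OF LD_div[OF LD_const LD_lin2]])
       (use nz in \<open>simp_all add: dR_def\<close>)
  have db21: "fb r (r * s) * (dQ - dR) = -(1 - fb r (r * s)) * (- dR)"
    by (rule two_forms[OF db2 dh opn eqs(5)])
  note Lf = L_comp[where g="\<lambda>s. ff r s", OF df R1(7)[OF s(1)] R1(2) refl df1]
  note La = L_comp[where g="\<lambda>s. fa r s", OF da R1(8)[OF s(1)] R1(4) refl da1]
  note Lb = L_comp[where g="\<lambda>s. fb r s", OF db R1(5) R1(6) refl db1]
  note La2 = L_comp[where g="\<lambda>s. fa r (r * s)", OF da2 R2(8)[OF s2(1)] R2(4) refl da21]
  note Lb2 = L_comp[where g="\<lambda>s. fb r (r * s)", OF db2 R2(5) R2(6) refl db21]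
  have "((\<lambda>s. rogers_L (ff r s) - rogers_L (fa r s) + rogers_L (fb r s)
            + rogers_L (fa r (r * s)) - rogers_L (fb r (r * s))) has_real_derivative
     (-(1/2)*((P + R - 2 * Q) * (dS - 2 * dQ) - (S + 2 * A - 2 * Q) * (dP + dR - 2 * dQ)))
   - (-(1/2)*((P - Q) * (dS - dQ) - (S + A - Q) * (dP - dQ)))
   + (-(1/2)*((A - Q) * (dP - dQ) - (\<rho> + P - Q) * (- dQ)))
   + (-(1/2)*((Q - R) * (dS - dR) - (\<rho> + S + A - R) * (dQ - dR)))
   - (-(1/2)*((A - R) * (dQ - dR) - (\<rho> + Q - R) * (- dR)))) (at s)"
    using DERIV_diff[OF DERIV_add[OF DERIV_add[OF DERIV_diff[OF Lf La] Lb] La2] Lb2]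
    unfolding lnf lna lnb lna2 lnb2 by simp
  moreover have "(-(1/2)*((P + R - 2 * Q) * (dS - 2 * dQ) - (S + 2 * A - 2 * Q) * (dP + dR - 2 * dQ)))
   - (-(1/2)*((P - Q) * (dS - dQ) - (S + A - Q) * (dP - dQ)))
   + (-(1/2)*((A - Q) * (dP - dQ) - (\<rho> + P - Q) * (- dQ)))
   + (-(1/2)*((Q - R) * (dS - dR) - (\<rho> + S + A - R) * (dQ - dR)))
   - (-(1/2)*((A - R) * (dQ - dR) - (\<rho> + Q - R) * (- dR))) = 0"
    by (simp add: algebra_simps)
  ultimately show ?thesis by simp
qed

lemma key_identity:
  fixes r s :: real assumes r: "0<r" "r<1" and s: "0\<le>s" "s<1"
  shows "rogers_L (ff r s) = (rogers_L (fa r s) - rogers_L (fb r s)) - (rogers_L (fa r (r * s)) - rogers_L (fb r (r * s)))"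
proof -
  define G where "G = (\<lambda>s. rogers_L (ff r s) - rogers_L (fa r s) + rogers_L (fb r s)
            + rogers_L (fa r (r * s)) - rogers_L (fb r (r * s)))"
  have G0: "G 0 = 0" unfolding G_def ff_def fa_def fb_def by simp
  have "G s = 0"
  proof (cases "s = 0")
    case True then show ?thesis using G0 by simp
  next
    case False
    with s have s0: "0 < s" by simp
    have nz: "\<And>x. x \<in> {0..s} \<Longrightarrow> 1 - r * x \<noteq> 0 \<and> 1 - r * (r * x) \<noteq> 0"
    proof -
      fix x assume x: "x \<in> {0..s}"
      then have x1: "0 \<le> x" "x < 1" using s by auto
      note a = rs_lt[OF r x1]
      note b = rs_lt[OF r a(3) a(1)]
      show "1 - r * x \<noteq> 0 \<and> 1 - r * (r * x) \<noteq> 0" using a(1) b(1) by auto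
    qed
    have im: "\<And>x. x \<in> {0..s} \<Longrightarrow> ff r x \<in> {0..<1} \<and> fa r x \<in> {0..<1} \<and> fb r x \<in> {0..<1}
                  \<and> fa r (r * x) \<in> {0..<1} \<and> fb r (r * x) \<in> {0..<1}"
    proof -
      fix x assume x: "x \<in> {0..s}"
      then have x1: "0 \<le> x" "x < 1" using s by auto
      note a = rs_lt[OF r x1]
      note R1 = ranges[OF r x1] and R2 = ranges[OF r a(3) a(1)]
      show "ff r x \<in> {0..<1} \<and> fa r x \<in> {0..<1} \<and> fb r x \<in> {0..<1}
                  \<and> fa r (r * x) \<in> {0..<1} \<and> fb r (r * x) \<in> {0..<1}"
        using R1(1-6) R2(1-6) by auto
    qed
    have c1: "continuous_on {0..s} (\<lambda>s. ff r s)" unfolding ff_def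
      by (intro continuous_intros) (use nz in auto)
    have c2: "continuous_on {0..s} (\<lambda>s. fa r s)" unfolding fa_def
      by (intro continuous_intros) (use nz in auto)
    have c3: "continuous_on {0..s} (\<lambda>s. fb r s)" unfolding fb_def
      by (intro continuous_intros) (use nz in auto)
    have c4: "continuous_on {0..s} (\<lambda>s. fa r (r * s))" unfolding fa_def
      by (intro continuous_intros) (use nz in auto)
    have c5: "continuous_on {0..s} (\<lambda>s. fb r (r * s))" unfolding fb_def
      by (intro continuous_intros) (use nz in auto)
    have cG: "continuous_on {0..s} G" unfolding G_def
      by (intro continuous_intros continuous_on_compose2[OF L_cont c1]
            continuous_on_compose2[OF L_cont c2] continuous_on_compose2[OF L_cont c3]
            continuous_on_compose2[OF L_cont c4] continuous_on_compose2[OF L_cont c5]) (use im in auto)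
    have "G s = G 0"
    proof (rule DERIV_isconst2[OF s0 cG])
      fix x assume "0 < x" "x < s"
      then show "DERIV G x :> 0" unfolding G_def using G_deriv[OF r, of x] s by simp
    qed (use s0 in auto)
    then show ?thesis using G0 by simp
  qed
  then show ?thesis unfolding G_def by simp
qed

lemma telescoped:
  fixes r :: real assumes r: "0<r" "r<1"
  shows "(\<lambda>m. rogers_L (ff r (r^Suc m))) sums rogers_L r"
proof -
  define T where "T = (\<lambda>s. rogers_L (fa r s) - rogers_L (fb r s))"
  have pw: "0 \<le> r^Suc n" "r^Suc n < 1" for n
    using r power_less_one_iff[of r "Suc n"] by auto
  have eq: "(\<lambda>m. rogers_L (ff r (r^Suc m))) = (\<lambda>n. T (r^Suc n) - T (r^Suc (Suc n)))"
    unfolding T_def using key_identity[OF r pw] by (simp add: fun_eq_iff)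
  have lim0: "(\<lambda>n. r^Suc n) \<longlonglongrightarrow> 0"
    using LIMSEQ_Suc[OF LIMSEQ_power_zero[of r]] r by simp
  have la: "(\<lambda>n. fa r (r^Suc n)) \<longlonglongrightarrow> fa r 0" unfolding fa_def
    by (intro tendsto_intros lim0) (use r in simp)
  have lb: "(\<lambda>n. fb r (r^Suc n)) \<longlonglongrightarrow> fb r 0" unfolding fb_def
    by (intro tendsto_intros lim0) (use r in simp)
  have "(\<lambda>n. rogers_L (fa r (r^Suc n))) \<longlonglongrightarrow> rogers_L (fa r 0)"
    apply (rule continuous_on_tendsto_compose[OF L_cont la])
    using r apply (simp add: fa_def)
    apply (intro always_eventually allI) using ranges[OF r pw] by auto
  moreover have "(\<lambda>n. rogers_L (fb r (r^Suc n))) \<longlonglongrightarrow> rogers_L (fb r 0)"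
    apply (rule continuous_on_tendsto_compose[OF L_cont lb])
    using r apply (simp add: fb_def)
    apply (intro always_eventually allI) using ranges(5,6)[OF r pw] by (simp add: less_imp_le)
  ultimately have "(\<lambda>n. T (r^Suc n)) \<longlonglongrightarrow> T 0"
    unfolding T_def by (intro tendsto_intros)
  hence "(\<lambda>n. T (r^Suc n) - T (r^Suc (Suc n))) sums (T (r^Suc 0) - T 0)"
    by (rule telescope_sums')
  moreover have "T (r^Suc 0) - T 0 = rogers_L r"
    unfolding T_def fa_def fb_def by simp
  ultimately show ?thesis unfolding eq by simp
qed

lemma mp_diff: "map_poly (of_int::int\<Rightarrow>real) (p - q) = map_poly of_int p - map_poly of_int q"
  by (rule poly_eqI) (simp add: coeff_map_poly)
lemma mp_x2: "map_poly (of_int::int\<Rightarrow>real) ([:0,2:] * p) = [:0,2:] * map_poly of_int p"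
  by (rule poly_eqI) (simp add: coeff_map_poly coeff_pCons split: nat.splits)
lemma chebU_rec: "poly (map_poly (of_int::int\<Rightarrow>real) (chebU (Suc (Suc m)))) x
   = 2*x*poly (map_poly of_int (chebU (Suc m))) x - poly (map_poly of_int (chebU m)) x"
  by (simp only: chebU.simps mp_diff mp_x2) simp
lemma chebU_closed:
  fixes q :: real assumes "q \<noteq> 0"
  shows "poly (map_poly of_int (chebU n)) ((q + 1/q)/2) * (q - 1/q) = q^(n+1) - (1/q)^(n+1)"
proof (induction n rule: chebU.induct)
  case 1 then show ?case by simp
next
  case 2 then show ?case using assms by (simp add: map_poly_pCons field_simps power2_eq_square)
next
  case (3 m)
  define P0 where "P0 = poly (map_poly real_of_int (chebU m)) ((q + 1/q)/2)"
  define P1 where "P1 = poly (map_poly real_of_int (chebU (Suc m))) ((q + 1/q)/2)"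
  have h0: "P0 * (q - 1/q) = q^(m+1) - (1/q)^(m+1)" using 3 P0_def by simp
  have h1: "P1 * (q - 1/q) = q^(m+2) - (1/q)^(m+2)" using 3 P1_def by simp
  have two: "2*((q + 1/q)/2) = q + 1/q" by simp
  have "(2*((q + 1/q)/2)*P1 - P0) * (q - 1/q) = (q + 1/q)*(P1 * (q - 1/q)) - P0 * (q - 1/q)"
    unfolding two by (simp only: left_diff_distrib mult.assoc)
  also have "\<dots> = (q + 1/q)*(q^(m+2) - (1/q)^(m+2)) - (q^(m+1) - (1/q)^(m+1))" by (simp only: h0 h1)
  also have "\<dots> = q^(m+3) - (1/q)^(m+3)"
  proof -
    define t where "t = 1/q"
    define a where "a = q^(m+1)"
    define b where "b = t^(m+1)"
    have qt: "q * t = 1" using assms t_def by simp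
    have p2: "q^(m+2) = q * a" "t^(m+2) = t * b" "q^(m+3) = q * (q * a)" "t^(m+3) = t * (t * b)"
      unfolding a_def b_def by (simp_all add: numeral_3_eq_3)
    have "(q + t)*(q * a - t * b) - (a - b) = q * (q * a) - t * (t * b) + (q * t - 1) * (a - b)"
      by (simp add: algebra_simps)
    then show ?thesis unfolding t_def[symmetric] p2 a_def[symmetric] b_def[symmetric] using qt by simp
  qed
  finally show ?case unfolding chebU_rec P0_def P1_def by (simp add: numeral_3_eq_3)
qed

lemma alg:
  fixes q p U :: real and k :: nat
  assumes q: "q > 1" and p: "p = 1/q" and U: "U * (q - p) = q^(k+1) - p^(k+1)"
  shows "1 / U^2 = (p^2)^k * (1-p^2)^2 / (1 - p^2 * (p^2)^k)^2"
proof -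
  have qp: "q * p = 1" using p q by simp
  have p01: "0 < p" "p < 1" using p q by auto
  define W where "W = p^2 * (p^2)^k"
  have W01: "0 < W" "W < 1"
  proof -
    show "0 < W" unfolding W_def using p01 by simp
    have a: "(p^2)^k \<le> 1" using p01 by (intro power_le_one) (auto simp: power_le_one)
    have b: "p^2 < 1" using p01 by (simp add: power_less_one_iff)
    have "W \<le> p^2 * 1" unfolding W_def by (rule mult_left_mono[OF a]) simp
    then show "W < 1" using b by simp
  qed
  have e1: "q - p = q * (1 - p^2)"
  proof -
    have "q * (1 - p^2) = q - (q * p) * p" by (simp add: algebra_simps power2_eq_square)
    then show ?thesis using qp by simp
  qed
  have Wp: "W = p^(k+1) * p^(k+1)" unfolding W_def
    by (simp add: power_mult[symmetric] power_add[symmetric] mult_2)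
  have qk: "q^(k+1) * p^(k+1) = 1"
    using qp power_mult_distrib[of q p "k+1", symmetric] by simp
  have e2: "q^(k+1) - p^(k+1) = q^(k+1) * (1 - W)"
  proof -
    have "q^(k+1) * (1 - W) = q^(k+1) - (q^(k+1) * p^(k+1)) * p^(k+1)" unfolding Wp
      by (simp add: algebra_simps)
    then show ?thesis using qk by simp
  qed
  have pp0: "p^2 < 1" using p01 by (simp add: power_less_one_iff)
  have pp: "1 - p^2 \<noteq> 0" using pp0 by simp
  have Ueq: "U * (q * (1 - p^2)) = q * q^k * (1 - W)" using U e1 e2 by simp
  have "q * (U * (1 - p^2)) = q * (q^k * (1 - W))" using Ueq by (simp add: mult_ac)
  hence Ueq2: "U * (1 - p^2) = q^k * (1 - W)" using q by simp
  have pqk: "p^k * q^k = 1" using qp power_mult_distrib[of p q k, symmetric] by (simp add: mult.commute)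
  have pqk2: "(p^k)^2 * (q^k)^2 = 1" using pqk by (simp add: power_mult_distrib[symmetric])
  have "U = q^k * (1 - W) / (1 - p^2)" using Ueq2 pp by (simp add: field_simps)
  hence "1 / U^2 = (1 - p^2)^2 / ((q^k)^2 * (1 - W)^2)" by (simp add: power_mult_distrib power_divide)
  also have "\<dots> = ((p^k)^2 * (q^k)^2) * (1 - p^2)^2 / ((q^k)^2 * (1 - W)^2)"
    using pqk2 by simp
  also have "\<dots> = (p^2)^k * (1 - p^2)^2 / (1 - W)^2"
    using q by (simp add: power_mult[symmetric] mult.commute[of 2 k])
  finally show ?thesis unfolding W_def .
qed

theorem corollary4:
  fixes x :: real
  assumes "x > 1"
  shows "(\<lambda>m. rogers_L (1 / (poly (map_poly of_int (chebU (Suc m))) x)^2))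
           sums rogers_L (1 / (x + sqrt (x^2 - 1))^2)"
proof -
  define q where "q = x + sqrt (x^2 - 1)"
  define p where "p = 1 / q"
  have sq: "sqrt (x^2 - 1) ^ 2 = x^2 - 1" using assms by simp
  have sq0: "0 \<le> sqrt (x^2 - 1)" using assms by simp
  have q1: "q > 1" unfolding q_def using assms sq0 by linarith
  have "q * (x - sqrt (x^2 - 1)) = 1" unfolding q_def
    using sq by (simp add: algebra_simps power2_eq_square)
  hence pe: "p = x - sqrt (x^2 - 1)" unfolding p_def using q1 by (simp add: field_simps)
  have xq: "x = (q + 1/q) / 2" using pe unfolding p_def q_def by simp
  have p01: "0 < p" "p < 1" using q1 p_def by auto
  have r01: "0 < p^2" "p^2 < 1" using p01 by (auto simp: power_less_one_iff)
  have termeq: "1 / (poly (map_poly of_int (chebU (Suc m))) x)^2 = ff (p^2) ((p^2)^Suc m)" for m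
  proof -
    have "poly (map_poly of_int (chebU (Suc m))) x * (q - p) = q^(Suc m + 1) - p^(Suc m + 1)"
      using chebU_closed[of q "Suc m"] q1 unfolding xq p_def by simp
    from alg[OF q1 p_def this] show ?thesis unfolding ff_def by simp
  qed
  have tgt: "1 / (x + sqrt (x^2 - 1))^2 = p^2" unfolding p_def q_def by (simp add: power_one_over)
  show ?thesis unfolding termeq tgt by (rule telescoped[OF r01])
qed

end
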